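(* For positive integers $m,n$, the series $$S_{m,n}=\sum_{\substack{i\ge1\\ m\mid i}}\ \sum_{\substack{j\ge1\\ mn\mid ij}}\frac{\mu(j)}{i^2j\,\varphi(ij)}$$ converges and equals $$S_{m,n}=\frac{S}{m^3n^3}\prod_{p\mid n}\frac{-p^4}{p^3-p-1}\prod_{\substack{p\mid m\\ p\nmid n}}\frac{p^3+p^2}{p^3-p-1},$$ where $S=\prod_{p\text{ prime}}\bigl(1-\frac{p}{p^3-1}\bigr)$ and products are over primes $p$.
   Context: $\mu$ is the Möbius function and $\varphi$ Euler's totient function. *)

theory Defs
  imports "HOL-Analysis.Analysis" "HOL-Number_Theory.Number_Theory" "HOL-Computational_Algebra.Squarefree"
begin

text \<open>Moebius function: mu(n) = (-1)^(number of prime factors) if n >= 1 is squarefree, else 0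
  (and mu(0) = 0 by convention; 0 never occurs in the sums below).\<close>
definition moebius_mu :: "nat \<Rightarrow> real" where
  "moebius_mu n = (if n > 0 \<and> squarefree n then (-1) ^ card (prime_factors n) else 0)"

definition S_const :: real where
  "S_const = (\<Prod>k. if prime k then 1 - real k / (real k ^ 3 - 1) else 1)"

end

theory Submission
  imports Defs
begin


lemma has_sum_mult_prod:
  fixes f g :: "_ \<Rightarrow> real"
  assumes f: "(f has_sum a) A" and g: "(g has_sum b) B"
  shows "((\<lambda>(x,y). f x * g y) has_sum (a * b)) (A \<times> B)"
proof -
  have fa: "(\<lambda>x. norm (f x)) summable_on A" using f summable_on_iff_abs_summable_on_real summable_on_def by blast
  have ga: "(\<lambda>x. norm (g x)) summable_on B" using g summable_on_iff_abs_summable_on_real summable_on_def by blast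
  have "(\<lambda>z. norm ((\<lambda>(x,y). f x * g y) z)) summable_on (A \<times> B)"
  proof (subst Infinite_Sum.abs_summable_on_Sigma_iff, intro conjI ballI)
    fix x assume "x \<in> A"
    show "(\<lambda>y. norm (case (x,y) of (x,y) \<Rightarrow> f x * g y)) summable_on B"
      using summable_on_cmult_right[OF ga, of "\<bar>f x\<bar>"] by (simp add: abs_mult)
  next
    have "(\<lambda>x. infsum (\<lambda>y. norm (case (x,y) of (x,y) \<Rightarrow> f x * g y)) B) = (\<lambda>x. \<bar>f x\<bar> * infsum (\<lambda>y. \<bar>g y\<bar>) B)"
      by (simp add: abs_mult infsum_cmult_right')
    then show "(\<lambda>x. norm (infsum (\<lambda>y. norm (case (x,y) of (x,y) \<Rightarrow> f x * g y)) B)) summable_on A"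
      using summable_on_cmult_left[OF fa, of "infsum (\<lambda>y. \<bar>g y\<bar>) B"]
      by (simp add: abs_mult infsum_nonneg)
  qed
  then have "(\<lambda>(x,y). f x * g y) summable_on (A \<times> B)"
    using summable_on_iff_abs_summable_on_real by blast
  then obtain c where c: "((\<lambda>(x,y). f x * g y) has_sum c) (A \<times> B)"
    using summable_on_def by blast
  have "((\<lambda>x. f x * b) has_sum c) A"
    by (rule has_sum_Sigma'[OF c]) (use has_sum_cmult_right[OF g] in auto)
  moreover have "((\<lambda>x. f x * b) has_sum (a * b)) A"
    using has_sum_cmult_left[OF f] .
  ultimately have "c = a * b" using has_sum_unique by blast
  with c show ?thesis by simp
qed



definition sm :: "nat \<Rightarrow> (nat \<times> nat) set" where
  "sm B = {(i,j). i > 0 \<and> j > 0 \<and> (\<forall>p\<in>prime_factors i. p \<le> B) \<and> (\<forall>p\<in>prime_factors j. p \<le> B)}"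

definition PB :: "nat \<Rightarrow> nat set" where "PB B = {p. prime p \<and> p \<le> B}"

definition GB :: "(nat \<Rightarrow> nat \<Rightarrow> nat \<Rightarrow> real) \<Rightarrow> nat \<Rightarrow> nat \<times> nat \<Rightarrow> real" where
  "GB h B ij = (\<Prod>p\<in>PB B. h p (multiplicity p (fst ij)) (multiplicity p (snd ij)))"

lemma finite_PB[simp]: "finite (PB B)"
  unfolding PB_def by auto

lemma PB_Suc: "PB (Suc B) = (if prime (Suc B) then insert (Suc B) (PB B) else PB B)"
  unfolding PB_def by (auto simp: le_Suc_eq)

lemma no_prime_factors_one:
  fixes i :: nat
  assumes "i > 0" "\<forall>p\<in>prime_factors i. p \<le> 0"
  shows "i = 1"
proof (rule ccontr)
  assume "i \<noteq> 1"
  then have "i > 1" using assms by auto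
  then obtain p where "prime p" "p dvd i" using prime_factor_nat[of i] by auto
  then have "p \<in> prime_factors i" using assms by (auto intro: prime_factorsI)
  then show False using assms \<open>prime p\<close> prime_gt_0_nat by fastforce
qed

lemma sm_0: "sm 0 = {(1,1)}"
  unfolding sm_def using no_prime_factors_one by auto

lemma sm_Suc_nonprime: "\<not> prime (Suc B) \<Longrightarrow> sm (Suc B) = sm B"
  unfolding sm_def by (auto simp: le_Suc_eq)

lemma mult_prime_power_times:
  fixes q i :: nat
  assumes "prime q" "\<not> q dvd i"
  shows "multiplicity q (q ^ a * i) = a"
  using assms by (intro multiplicity_decomposeI[of _ _ _ i]) auto

lemma mult_other_prime_power_times:
  fixes p q i :: nat
  assumes "prime q" "prime p" "p \<noteq> q"
  shows "multiplicity p (q ^ a * i) = multiplicity p i"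
proof -
  have "\<not> p dvd q ^ a"
    using assms prime_dvd_power primes_dvd_imp_eq by blast
  then show ?thesis using assms by (intro multiplicity_prime_elem_times_other) auto
qed

lemma prime_factors_prime_power_times:
  fixes q i :: nat
  assumes "prime q" "i > 0"
  shows "prime_factors (q ^ a * i) = (if a = 0 then {} else {q}) \<union> prime_factors i"
proof -
  have "prime_factors (q ^ a * i) = prime_factors (q ^ a) \<union> prime_factors i"
    using assms by (intro prime_factors_product) auto
  moreover have "prime_factors (q ^ a) = (if a = 0 then {} else {q})"
    using assms by (auto simp: prime_factors_power prime_prime_factors)
  ultimately show ?thesis by simp
qed

lemma sm_prime_dvd:
  assumes "(i,j) \<in> sm B" "prime q" "q > B"
  shows "\<not> q dvd i" "\<not> q dvd j"
proof -
  show "\<not> q dvd i"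
  proof
    assume "q dvd i"
    then have "q \<in> prime_factors i" using assms by (auto simp: sm_def intro: prime_factorsI)
    then show False using assms by (auto simp: sm_def)
  qed
  show "\<not> q dvd j"
  proof
    assume "q dvd j"
    then have "q \<in> prime_factors j" using assms by (auto simp: sm_def intro: prime_factorsI)
    then show False using assms by (auto simp: sm_def)
  qed
qed

definition qmap :: "nat \<Rightarrow> (nat \<times> nat) \<times> (nat \<times> nat) \<Rightarrow> nat \<times> nat" where
  "qmap q = (\<lambda>((a,b),(i,j)). (q ^ a * i, q ^ b * j))"

lemma sm_prime_image:
  assumes q: "prime (Suc B)"
  shows "sm (Suc B) = qmap (Suc B) ` (UNIV \<times> sm B)"
proof (intro equalityI subsetI)
  fix x assume x: "x \<in> qmap (Suc B) ` (UNIV \<times> sm B)"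
  then obtain a b i j where e: "x = (Suc B ^ a * i, Suc B ^ b * j)" and ij: "(i,j) \<in> sm B"
    by (auto simp: qmap_def)
  then show "x \<in> sm (Suc B)" using q prime_gt_1_nat[OF q]
    by (auto simp: sm_def prime_factors_prime_power_times split: if_splits)
next
  fix x assume x: "x \<in> sm (Suc B)"
  obtain i j where xe: "x = (i,j)" by (cases x)
  let ?q = "Suc B"
  have i0: "i > 0" and j0: "j > 0" using x xe by (auto simp: sm_def)
  have nu: "\<not> is_unit ?q" using prime_gt_1_nat[OF q] by auto
  obtain i' where i': "i = ?q ^ multiplicity ?q i * i'" "\<not> ?q dvd i'"
    using multiplicity_decompose'[of i ?q] i0 nu by auto
  obtain j' where j': "j = ?q ^ multiplicity ?q j * j'" "\<not> ?q dvd j'"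
    using multiplicity_decompose'[of j ?q] j0 nu by auto
  have i'0: "i' > 0" using i' i0 by (cases "i' = 0") auto
  have j'0: "j' > 0" using j' j0 by (cases "j' = 0") auto
  have pfi: "prime_factors i' \<subseteq> prime_factors i"
    using i' i'0 q by (metis Un_upper2 prime_factors_prime_power_times)
  have pfj: "prime_factors j' \<subseteq> prime_factors j"
    using j' j'0 q by (metis Un_upper2 prime_factors_prime_power_times)
  have "\<forall>p\<in>prime_factors i'. p \<le> B"
  proof
    fix p assume p: "p \<in> prime_factors i'"
    then have "p \<le> Suc B" using pfi x xe by (auto simp: sm_def)
    moreover have "p \<noteq> Suc B" using p i'(2) by auto
    ultimately show "p \<le> B" by simp
  qed
  moreover have "\<forall>p\<in>prime_factors j'. p \<le> B"
  proof
    fix p assume p: "p \<in> prime_factors j'"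
    then have "p \<le> Suc B" using pfj x xe by (auto simp: sm_def)
    moreover have "p \<noteq> Suc B" using p j'(2) by auto
    ultimately show "p \<le> B" by simp
  qed
  ultimately have "(i', j') \<in> sm B" using i'0 j'0 by (auto simp: sm_def)
  moreover have "x = qmap ?q ((multiplicity ?q i, multiplicity ?q j), (i', j'))"
    unfolding qmap_def xe using i'(1) j'(1) by simp
  ultimately show "x \<in> qmap (Suc B) ` (UNIV \<times> sm B)" by blast
qed

lemma qmap_inj:
  assumes q: "prime (Suc B)"
  shows "inj_on (qmap (Suc B)) (UNIV \<times> sm B)"
proof (rule inj_onI)
  fix x y assume x: "x \<in> UNIV \<times> sm B" and y: "y \<in> UNIV \<times> sm B" and e: "qmap (Suc B) x = qmap (Suc B) y"
  obtain a b i j where xe: "x = ((a,b),(i,j))" by (metis prod.exhaust)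
  obtain a' b' i' j' where ye: "y = ((a',b'),(i',j'))" by (metis prod.exhaust)
  have nd: "\<not> Suc B dvd i" "\<not> Suc B dvd j" "\<not> Suc B dvd i'" "\<not> Suc B dvd j'"
    using sm_prime_dvd[of _ _ B "Suc B"] x y xe ye q by auto
  have e1: "Suc B ^ a * i = Suc B ^ a' * i'" and e2: "Suc B ^ b * j = Suc B ^ b' * j'"
    using e xe ye by (auto simp: qmap_def)
  have "a = a'" using mult_prime_power_times[OF q nd(1), of a] mult_prime_power_times[OF q nd(3), of a'] e1 by simp
  moreover have "b = b'" using mult_prime_power_times[OF q nd(2), of b] mult_prime_power_times[OF q nd(4), of b'] e2 by simp
  ultimately show "x = y" using e1 e2 xe ye by simp
qed

lemma GB_qmap:
  assumes q: "prime (Suc B)" and ij: "(i,j) \<in> sm B"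
  shows "GB h (Suc B) (qmap (Suc B) ((a,b),(i,j))) = h (Suc B) a b * GB h B (i,j)"
proof -
  have nd: "\<not> Suc B dvd i" "\<not> Suc B dvd j"
    using sm_prime_dvd[OF ij q] by auto
  have "GB h (Suc B) (qmap (Suc B) ((a,b),(i,j))) =
        h (Suc B) (multiplicity (Suc B) (Suc B ^ a * i)) (multiplicity (Suc B) (Suc B ^ b * j)) *
        (\<Prod>p\<in>PB B. h p (multiplicity p (Suc B ^ a * i)) (multiplicity p (Suc B ^ b * j)))"
  proof -
    have "PB (Suc B) = insert (Suc B) (PB B)" "Suc B \<notin> PB B" using q by (auto simp: PB_Suc PB_def)
    then show ?thesis unfolding GB_def qmap_def by simp
  qed
  also have "\<dots> = h (Suc B) a b * GB h B (i,j)"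
    unfolding GB_def
    by (intro arg_cong2[where f="(*)"] prod.cong refl)
       (auto simp: mult_prime_power_times[OF q nd(1)] mult_prime_power_times[OF q nd(2)]
                   PB_def q mult_other_prime_power_times)
  finally show ?thesis .
qed

lemma euler_smooth:
  assumes hs: "\<And>p. prime p \<Longrightarrow> ((\<lambda>(a,b). h p a b) has_sum E p) UNIV"
  shows "(GB h B has_sum (\<Prod>p\<in>PB B. E p)) (sm B)"
proof (induction B)
  case 0
  have "PB 0 = {}" by (auto simp: PB_def)
  then show ?case by (simp add: sm_0 GB_def has_sum_finiteI)
next
  case (Suc B)
  show ?case
  proof (cases "prime (Suc B)")
    case False
    then have "GB h (Suc B) = GB h B" by (intro ext) (simp add: GB_def PB_Suc)
    then show ?thesis using Suc False by (simp add: sm_Suc_nonprime PB_Suc)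
  next
    case q: True
    have "((\<lambda>((a,b),(i,j)). h (Suc B) a b * GB h B (i,j)) has_sum (E (Suc B) * (\<Prod>p\<in>PB B. E p))) (UNIV \<times> sm B)"
      using has_sum_mult_prod[OF hs[OF q] Suc.IH] by (simp add: case_prod_beta')
    also have "?this \<longleftrightarrow> ((GB h (Suc B) \<circ> qmap (Suc B)) has_sum (E (Suc B) * (\<Prod>p\<in>PB B. E p))) (UNIV \<times> sm B)"
      by (intro has_sum_cong) (auto simp: GB_qmap[OF q])
    also have "\<dots> \<longleftrightarrow> (GB h (Suc B) has_sum (E (Suc B) * (\<Prod>p\<in>PB B. E p))) (sm (Suc B))"
      by (subst sm_prime_image[OF q], subst has_sum_reindex[OF qmap_inj[OF q]]) simp
    moreover have "Suc B \<notin> PB B" by (simp add: PB_def)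
    ultimately show ?thesis using q by (simp add: PB_Suc)
  qed
qed



lemma GB_stable:
  assumes "\<And>p. prime p \<Longrightarrow> B < p \<Longrightarrow> p \<le> B' \<Longrightarrow> h p (multiplicity p i) (multiplicity p j) = 1"
      "B \<le> B'"
  shows "GB h B' (i,j) = GB h B (i,j)"
proof -
  have "\<forall>p\<in>PB B' - PB B. h p (multiplicity p i) (multiplicity p j) = 1"
    using assms(1) by (auto simp: PB_def not_le)
  then show ?thesis unfolding GB_def fst_conv snd_conv
    by (intro prod.mono_neutral_right) (use assms(2) in \<open>auto simp: PB_def\<close>)
qed

lemma prime_factor_le:
  fixes i p :: nat
  assumes "i > 0" "p \<in> prime_factors i"
  shows "p \<le> i"
  using assms by (auto intro: dvd_imp_le)

lemma in_sm_big:
  assumes "i > 0" "j > 0" "i \<le> B" "j \<le> B"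
  shows "(i,j) \<in> sm B"
  using assms prime_factor_le[of i] prime_factor_le[of j] by (force simp: sm_def)

lemma GB_abs: "GB (\<lambda>p a b. \<bar>h p a b\<bar>) B x = \<bar>GB h B x\<bar>"
  unfolding GB_def by (simp add: abs_prod)

lemma euler_product_pairs:
  fixes h :: "nat \<Rightarrow> nat \<Rightarrow> nat \<Rightarrow> real" and B0 :: nat and C :: real
  assumes hs: "\<And>p. prime p \<Longrightarrow> ((\<lambda>(a,b). h p a b) has_sum E p) UNIV"
  and h1: "\<And>p. prime p \<Longrightarrow> p > B0 \<Longrightarrow> h p 0 0 = 1"
  and bound: "\<And>B. (\<Prod>p\<in>PB B. infsum (\<lambda>(a,b). \<bar>h p a b\<bar>) UNIV) \<le> C"
  shows "(\<lambda>(i,j). GB h (B0 + i + j) (i,j)) summable_on {(i,j). i > 0 \<and> j > 0}"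
    and "(\<lambda>B. \<Prod>p\<in>PB B. E p) \<longlonglongrightarrow> infsum (\<lambda>(i,j). GB h (B0 + i + j) (i,j)) {(i,j). i > 0 \<and> j > 0}"
proof -
  define F where "F = (\<lambda>(i,j). GB h (B0 + i + j) (i,j))"
  define D where "D = {(i::nat,j::nat). i > 0 \<and> j > 0}"
  define E' where "E' p = infsum (\<lambda>(a,b). \<bar>h p a b\<bar>) UNIV" for p
  have habs: "((\<lambda>(a,b). \<bar>h p a b\<bar>) has_sum E' p) UNIV" if p: "prime p" for p
  proof -
    have "(\<lambda>(a,b). h p a b) summable_on UNIV" using hs[OF p] summable_on_def by blast
    then have "(\<lambda>x. norm ((\<lambda>(a,b). h p a b) x)) summable_on UNIV"
      using summable_on_iff_abs_summable_on_real by blast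
    then have "(\<lambda>(a,b). \<bar>h p a b\<bar>) summable_on UNIV"
      by (simp add: case_prod_beta')
    then show ?thesis unfolding E'_def by (rule has_sum_infsum)
  qed
  have smabs: "((\<lambda>x. \<bar>GB h B x\<bar>) has_sum (\<Prod>p\<in>PB B. E' p)) (sm B)" for B
  proof -
    have "GB (\<lambda>p a b. \<bar>h p a b\<bar>) B = (\<lambda>x. \<bar>GB h B x\<bar>)" by (rule ext, rule GB_abs)
    then show ?thesis using euler_smooth[of "\<lambda>p a b. \<bar>h p a b\<bar>" E' B] habs by simp
  qed
  have sms: "(GB h B has_sum (\<Prod>p\<in>PB B. E p)) (sm B)" for B
    using euler_smooth[of h E B] hs by simp
  have smD: "sm B \<subseteq> D" for B by (auto simp: sm_def D_def)
  have Feq: "F x = GB h B x" if x: "x \<in> sm B" and B: "B \<ge> B0" for x B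
  proof -
    obtain i j where xe: "x = (i,j)" by (cases x)
    have ij: "(i,j) \<in> sm B" using x xe by simp
    have i0: "i > 0" "j > 0" using ij by (auto simp: sm_def)
    let ?B1 = "B0 + i + j"
    let ?M = "max B ?B1"
    have "GB h ?M (i,j) = GB h B (i,j)"
    proof (rule GB_stable)
      fix p assume p: "prime p" "B < p" "p \<le> ?M"
      have "\<not> p dvd i" "\<not> p dvd j" using sm_prime_dvd[OF ij p(1,2)] by auto
      then have "multiplicity p i = 0" "multiplicity p j = 0"
        by (auto simp: not_dvd_imp_multiplicity_0)
      then show "h p (multiplicity p i) (multiplicity p j) = 1" using h1[OF p(1)] p B by simp
    qed simp
    moreover have "GB h ?M (i,j) = GB h ?B1 (i,j)"
    proof (rule GB_stable)
      fix p assume p: "prime p" "?B1 < p" "p \<le> ?M"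
      have "\<not> p dvd i" "\<not> p dvd j" using p i0 by (auto dest: dvd_imp_le)
      then have "multiplicity p i = 0" "multiplicity p j = 0"
        by (auto simp: not_dvd_imp_multiplicity_0)
      then show "h p (multiplicity p i) (multiplicity p j) = 1" using h1[OF p(1)] p by simp
    qed simp
    ultimately show ?thesis unfolding F_def xe by simp
  qed
  have Fabs_sum: "(\<lambda>x. \<bar>F x\<bar>) summable_on D"
  proof (rule nonneg_bdd_above_summable_on)
    show "bdd_above (sum (\<lambda>x. \<bar>F x\<bar>) ` {X. X \<subseteq> D \<and> finite X})"
    proof (rule bdd_aboveI2)
      fix X assume X: "X \<in> {X. X \<subseteq> D \<and> finite X}"
      define B where "B = B0 + (\<Sum>x\<in>X. fst x + snd x)"
      have XB: "X \<subseteq> sm B"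
      proof
        fix x assume x: "x \<in> X"
        have "fst x + snd x \<le> (\<Sum>x\<in>X. fst x + snd x)"
          using X x by (intro member_le_sum) auto
        then show "x \<in> sm B" using x X in_sm_big[of "fst x" "snd x" B]
          by (cases x) (auto simp: B_def D_def)
      qed
      have "(\<Sum>x\<in>X. \<bar>F x\<bar>) = (\<Sum>x\<in>X. \<bar>GB h B x\<bar>)"
        using XB Feq[of _ B] by (intro sum.cong) (auto simp: B_def)
      also have "\<dots> \<le> (\<Prod>p\<in>PB B. E' p)"
        using X XB by (intro finite_sum_le_has_sum[OF smabs]) auto
      also have "\<dots> \<le> C" using bound unfolding E'_def by simp
      finally show "(\<Sum>x\<in>X. \<bar>F x\<bar>) \<le> C" .
    qed
  qed simp
  have Fsum: "F summable_on D"
    by (subst summable_on_iff_abs_summable_on_real) (simp add: Fabs_sum)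
  then show "(\<lambda>(i,j). GB h (B0 + i + j) (i,j)) summable_on {(i,j). i > 0 \<and> j > 0}"
    unfolding F_def D_def .
  have "(\<lambda>B. \<Prod>p\<in>PB B. E p) \<longlonglongrightarrow> infsum F D"
  proof (rule LIMSEQ_I)
    fix r :: real assume r: "r > 0"
    obtain X0 where X0: "finite X0" "X0 \<subseteq> D" "dist (sum (\<lambda>x. \<bar>F x\<bar>) X0) (infsum (\<lambda>x. \<bar>F x\<bar>) D) \<le> r/2"
      using infsum_finite_approximation[OF Fabs_sum, of "r/2"] r by auto
    define N where "N = B0 + (\<Sum>x\<in>X0. fst x + snd x)"
    have X0N: "X0 \<subseteq> sm B" if "B \<ge> N" for B
    proof
      fix x assume x: "x \<in> X0"
      have "fst x + snd x \<le> (\<Sum>x\<in>X0. fst x + snd x)"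
        using X0 x by (intro member_le_sum) auto
      then show "x \<in> sm B" using x X0 in_sm_big[of "fst x" "snd x" B] that
        by (cases x) (auto simp: N_def D_def)
    qed
    show "\<exists>no. \<forall>B\<ge>no. norm ((\<Prod>p\<in>PB B. E p) - infsum F D) < r"
    proof (intro exI allI impI)
      fix B assume B: "B \<ge> N"
      have BB0: "B \<ge> B0" using B by (simp add: N_def)
      have "(F has_sum (\<Prod>p\<in>PB B. E p)) (sm B)"
        using sms[of B] by (rule has_sum_cong[THEN iffD1, rotated]) (use Feq BB0 in auto)
      then have e1: "infsum F (sm B) = (\<Prod>p\<in>PB B. E p)" by (rule infsumI)
      have sD: "F summable_on (D - sm B)" using Fsum by (rule summable_on_subset_banach) auto
      have sB: "F summable_on sm B" using Fsum smD by (rule summable_on_subset_banach)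
      have "infsum F D = infsum F (sm B) + infsum F (D - sm B)"
        using infsum_Un_disjoint[OF sB sD] smD[of B] by (simp add: Un_absorb1)
      then have "norm ((\<Prod>p\<in>PB B. E p) - infsum F D) = norm (infsum F (D - sm B))"
        using e1 by simp
      also have "\<dots> \<le> infsum (\<lambda>x. norm (F x)) (D - sm B)"
        by (rule norm_infsum_bound) (use Fabs_sum in \<open>auto intro: summable_on_subset_banach\<close>)
      also have "\<dots> \<le> infsum (\<lambda>x. \<bar>F x\<bar>) (D - X0)"
        unfolding real_norm_def
        using X0N[OF B] by (intro infsum_mono2) (auto intro: summable_on_subset_banach[OF Fabs_sum])
      also have "infsum (\<lambda>x. \<bar>F x\<bar>) (D - X0) = infsum (\<lambda>x. \<bar>F x\<bar>) D - sum (\<lambda>x. \<bar>F x\<bar>) X0"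
      proof -
        have "infsum (\<lambda>x. \<bar>F x\<bar>) D = infsum (\<lambda>x. \<bar>F x\<bar>) X0 + infsum (\<lambda>x. \<bar>F x\<bar>) (D - X0)"
          using infsum_Un_disjoint[of "\<lambda>x. \<bar>F x\<bar>" X0 "D - X0"] X0
            summable_on_subset_banach[OF Fabs_sum, of "D - X0"]
          by (simp add: Un_absorb1)
        then show ?thesis using X0 by simp
      qed
      also have "\<dots> \<le> r/2" using X0(3) unfolding dist_real_def by linarith
      also have "\<dots> < r" using r by simp
      finally show "norm ((\<Prod>p\<in>PB B. E p) - infsum F D) < r" .
    qed
  qed
  then show "(\<lambda>B. \<Prod>p\<in>PB B. E p) \<longlonglongrightarrow> infsum (\<lambda>(i,j). GB h (B0 + i + j) (i,j)) {(i,j). i > 0 \<and> j > 0}"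
    unfolding F_def D_def .
qed



lemma geom_has_sum_from:
  fixes x :: real
  assumes "\<bar>x\<bar> < 1"
  shows "((\<lambda>a. x ^ a) has_sum (x ^ k / (1 - x))) {k..}"
proof -
  have "((\<lambda>a. x ^ a) has_sum (1 / (1 - x))) UNIV"
    using assms by (intro norm_summable_imp_has_sum geometric_sums summable_geometric) (auto simp: power_abs)
  then have "((\<lambda>a. x ^ k * x ^ a) has_sum (x ^ k * (1 / (1 - x)))) UNIV"
    by (rule has_sum_cmult_right)
  also have "?this \<longleftrightarrow> ((\<lambda>a. x ^ a) has_sum (x ^ k / (1 - x))) {k..}"
    by (intro has_sum_reindex_bij_witness[of _ "\<lambda>a. a - k" "\<lambda>a. a + k"]) (auto simp: power_add)
  finally show ?thesis .
qed

definition tloc :: "real \<Rightarrow> nat \<Rightarrow> nat \<Rightarrow> nat \<Rightarrow> real" where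
  "tloc s p a b = (if b = 0 then 1 else if b = 1 then s else 0) /
      (real p ^ (2 * a) * real p ^ b * real (totient (p ^ (a + b))))"

lemma real_pm1: "prime p \<Longrightarrow> real (p - Suc 0) = real p - 1"
  by (metis One_nat_def Suc_leI of_nat_1 of_nat_diff prime_gt_0_nat)

lemma pow2a: "(x::real) ^ (2 * a) = (x ^ a) ^ 2"
  by (metis power_mult mult.commute)

lemma pow3a: "(1 / (x::real) ^ 3) ^ a = 1 / (x ^ a) ^ 3"
  by (metis power_one_over power_mult mult.commute)

lemma alg0: "(P::real) > 1 \<Longrightarrow> y > 0 \<Longrightarrow> 1 / ((P*y)^2 * (y*(P-1))) = P/(P-1) * (1/(P*y)^3)"
  by (simp add: field_simps power2_eq_square power3_eq_cube)

lemma alg1: "(P::real) > 1 \<Longrightarrow> z > 0 \<Longrightarrow> s / (z^2 * P * (z*(P-1))) = s/(P*(P-1)) * (1/z^3)"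
  by (simp add: field_simps power2_eq_square power3_eq_cube)

lemma tloc_0:
  assumes p: "prime p" and a: "a \<ge> 1"
  shows "tloc s p a 0 = real p / (real p - 1) * (1 / real p ^ 3) ^ a"
proof -
  have T: "real (totient (p ^ a)) = real p ^ (a - 1) * (real p - 1)"
    using p a by (simp add: totient_prime_power real_pm1)
  have pa: "real p ^ a = real p * real p ^ (a - 1)" using a
    by (metis One_nat_def Suc_diff_le diff_Suc_1 power_Suc)
  have P: "real p > 1" using prime_gt_1_nat[OF p] by simp
  have "tloc s p a 0 = 1 / ((real p * real p ^ (a - 1))^2 * (real p ^ (a - 1) * (real p - 1)))"
    unfolding tloc_def by (simp add: pow2a pa T)
  also have "\<dots> = real p / (real p - 1) * (1 / (real p * real p ^ (a - 1)) ^ 3)"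
    using P by (intro alg0) auto
  also have "\<dots> = real p / (real p - 1) * (1 / real p ^ 3) ^ a"
    by (simp add: pow3a pa)
  finally show ?thesis .
qed

lemma tloc_1:
  assumes p: "prime p"
  shows "tloc s p a 1 = s / (real p * (real p - 1)) * (1 / real p ^ 3) ^ a"
proof -
  have T: "real (totient (p ^ (a + 1))) = real p ^ a * (real p - 1)"
    using totient_prime_power_Suc[OF p, of a] p by (simp add: real_pm1)
  have P: "real p > 1" using prime_gt_1_nat[OF p] by simp
  have "tloc s p a 1 = s / ((real p ^ a)^2 * real p * (real p ^ a * (real p - 1)))"
    unfolding tloc_def by (simp only: pow2a T) simp
  also have "\<dots> = s / (real p * (real p - 1)) * (1 / (real p ^ a) ^ 3)"
    using P by (intro alg1) auto
  also have "\<dots> = s / (real p * (real p - 1)) * (1 / real p ^ 3) ^ a"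
    by (simp add: pow3a)
  finally show ?thesis .
qed

lemma x_small: "prime p \<Longrightarrow> \<bar>1 / real p ^ 3\<bar> < 1"
  using prime_gt_1_nat[of p] by (simp add: power_gt1)

lemma tloc0_from:
  assumes p: "prime p" and k: "k \<ge> 1"
  shows "((\<lambda>a. tloc s p a 0) has_sum (real p / (real p - 1) * ((1 / real p ^ 3) ^ k / (1 - 1 / real p ^ 3)))) {k..}"
proof -
  have "((\<lambda>a. real p / (real p - 1) * (1 / real p ^ 3) ^ a) has_sum (real p / (real p - 1) * ((1 / real p ^ 3) ^ k / (1 - 1 / real p ^ 3)))) {k..}"
    by (intro has_sum_cmult_right geom_has_sum_from x_small p)
  then show ?thesis
    by (rule has_sum_cong[THEN iffD1, rotated]) (use k in \<open>auto simp: tloc_0[OF p]\<close>)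
qed

lemma tloc1_from:
  assumes p: "prime p"
  shows "((\<lambda>a. tloc s p a 1) has_sum (s / (real p * (real p - 1)) * ((1 / real p ^ 3) ^ k / (1 - 1 / real p ^ 3)))) {k..}"
proof -
  have "((\<lambda>a. s / (real p * (real p - 1)) * (1 / real p ^ 3) ^ a) has_sum (s / (real p * (real p - 1)) * ((1 / real p ^ 3) ^ k / (1 - 1 / real p ^ 3)))) {k..}"
    by (intro has_sum_cmult_right geom_has_sum_from x_small p)
  then show ?thesis
    by (rule has_sum_cong[THEN iffD1, rotated]) (auto simp: tloc_1[OF p, unfolded One_nat_def])
qed

lemma tloc0_all:
  assumes p: "prime p"
  shows "((\<lambda>a. tloc s p a 0) has_sum (1 + real p / (real p - 1) * ((1 / real p ^ 3) / (1 - 1 / real p ^ 3)))) UNIV"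
proof -
  have "((\<lambda>a. tloc s p a 0) has_sum (1 + real p / (real p - 1) * ((1 / real p ^ 3) ^ 1 / (1 - 1 / real p ^ 3)))) ({0} \<union> {1..})"
  proof (intro has_sum_Un_disjoint tloc0_from p)
    show "((\<lambda>a. tloc s p a 0) has_sum 1) {0}" by (rule has_sum_finiteI) (auto simp: tloc_def)
  qed auto
  moreover have "{0} \<union> {1::nat..} = UNIV" by auto
  ultimately show ?thesis by simp
qed

lemma has_sum_two_rows:
  fixes g :: "nat \<Rightarrow> nat \<Rightarrow> real"
  assumes z: "\<And>a b. b \<ge> 2 \<Longrightarrow> g a b = 0"
    and s0: "((\<lambda>a. g a 0) has_sum S0) UNIV" and s1: "((\<lambda>a. g a 1) has_sum S1) UNIV"
  shows "((\<lambda>(a,b). g a b) has_sum (S0 + S1)) UNIV"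
proof -
  have i0: "inj (\<lambda>a::nat. (a, 0::nat))" and i1: "inj (\<lambda>a::nat. (a, 1::nat))" by (auto simp: inj_on_def)
  have "((\<lambda>(a,b). g a b) has_sum S0) (range (\<lambda>a. (a, 0::nat)))"
    using s0 by (subst has_sum_reindex[OF i0]) (simp add: o_def)
  moreover have "((\<lambda>(a,b). g a b) has_sum S1) (range (\<lambda>a. (a, 1::nat)))"
    using s1 by (subst has_sum_reindex[OF i1]) (simp add: o_def)
  ultimately have "((\<lambda>(a,b). g a b) has_sum (S0 + S1)) (range (\<lambda>a. (a, 0::nat)) \<union> range (\<lambda>a. (a, 1::nat)))"
    by (intro has_sum_Un_disjoint) auto
  also have "?this \<longleftrightarrow> ((\<lambda>(a,b). g a b) has_sum (S0 + S1)) UNIV"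
  proof (rule has_sum_cong_neutral)
    fix x :: "nat \<times> nat" assume "x \<in> UNIV - (range (\<lambda>a. (a, 0)) \<union> range (\<lambda>a. (a, 1)))"
    moreover obtain a b where ab: "x = (a,b)" by (cases x)
    ultimately have "b \<noteq> 0" "b \<noteq> 1" by auto
    then show "(case x of (a, b) \<Rightarrow> g a b) = 0" using z ab by simp
  qed auto
  finally show ?thesis .
qed



lemma a3: "(Q::real) > 1 \<Longrightarrow> w/(1 - 1/Q) = w * Q/(Q-1)"
  by (simp add: divide_simps)

lemma algA0:
  assumes P: "(P::real) > 1"
  shows "1 + P/(P-1) * ((1/P^3)/(1 - 1/P^3)) + (-1)/(P*(P-1)) * ((1/P^3)^0/(1 - 1/P^3)) = 1 - P/(P^3-1)"
proof -
  have P3: "P^3 > 1" using P by (simp add: one_less_power)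
  show ?thesis unfolding a3[OF P3] using P P3
    by (simp add: divide_simps power2_eq_square power3_eq_cube) (simp add: algebra_simps)
qed

lemma algA1:
  assumes P: "(P::real) > 1"
  shows "P/(P-1) * (w/(1 - 1/P^3)) + (-1)/(P*(P-1)) * (w/(1 - 1/P^3)) = w * ((P^3+P^2)/(P^3-1))"
proof -
  have P3: "P^3 > 1" using P by (simp add: one_less_power)
  show ?thesis unfolding a3[OF P3] using P P3
    by (simp add: divide_simps power2_eq_square power3_eq_cube) (simp add: algebra_simps)
qed

lemma algA2:
  assumes P: "(P::real) > 1"
  shows "P/(P-1) * ((w * (1/P^3))/(1 - 1/P^3)) + (-1)/(P*(P-1)) * (w/(1 - 1/P^3)) = (w * (1/P^3)) * (-(P^4)/(P^3-1))"
proof -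
  have P3: "P^3 > 1" using P by (simp add: one_less_power)
  show ?thesis unfolding a3[OF P3] using P P3
    by (simp add: divide_simps power2_eq_square power3_eq_cube power4_eq_xxxx) (simp add: algebra_simps)
qed

lemma algAbs:
  assumes P: "(P::real) \<ge> 2"
  shows "1 + P/(P-1) * ((1/P^3)/(1 - 1/P^3)) + 1/(P*(P-1)) * ((1/P^3)^0/(1 - 1/P^3)) \<le> 1 + 4 * inverse (P^2)"
proof -
  have P3: "P^3 \<ge> 8" using power_mono[OF P, of 3] by simp
  have e: "1 + P/(P-1) * ((1/P^3)/(1 - 1/P^3)) + 1/(P*(P-1)) * ((1/P^3)^0/(1 - 1/P^3))
        = 1 + (P^2 + P^3)/(P*(P-1)*(P^3-1))"
    unfolding a3[of "P^3"] using P P3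
    by (simp add: divide_simps power2_eq_square power3_eq_cube) (simp add: algebra_simps)
  have "(P^2 + P^3)/(P*(P-1)*(P^3-1)) \<le> 4 / P^2"
  proof -
    have d: "P*(P-1)*(P^3-1) > 0" using P P3 by simp
    have "(P^2 + P^3) * P^2 \<le> 4 * (P*(P-1)*(P^3-1))"
    proof -
      have A: "P^3 * (3*P - 5) \<ge> P^3 * 1" using P P3 by (intro mult_left_mono) auto
      have "P * P \<ge> 2 * 2" using P by (intro mult_mono) auto
      then have "(P * P) * P \<ge> 4 * P" using P by (intro mult_right_mono) auto
      then have B: "P^3 \<ge> 4 * P" by (simp add: power3_eq_cube)
      have A': "P^3 * (3*P - 5) = 3 * P^4 - 5 * P^3" by (simp add: algebra_simps power3_eq_cube power4_eq_xxxx)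
      have C: "3*P^4 - 5*P^3 - 4*P + 4 \<ge> 0" using A A' B by linarith
      have "P * (3*P^4 - 5*P^3 - 4*P + 4) \<ge> 0" using C P by simp
      moreover have "4 * (P*(P-1)*(P^3-1)) - (P^2 + P^3) * P^2 = P * (3*P^4 - 5*P^3 - 4*P + 4)"
        by (simp add: algebra_simps power2_eq_square power3_eq_cube power4_eq_xxxx)
      ultimately show ?thesis by linarith
    qed
    then show ?thesis using d P by (simp add: divide_simps)
  qed
  then show ?thesis using e by (simp add: divide_inverse)
qed


definition hh :: "nat \<Rightarrow> nat \<Rightarrow> nat \<Rightarrow> nat \<Rightarrow> nat \<Rightarrow> real" where
  "hh m n p a b = (if multiplicity p m \<le> a \<and> multiplicity p (m*n) \<le> a + b then tloc (-1) p a b else 0)"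

definition Eloc :: "nat \<Rightarrow> nat \<Rightarrow> nat \<Rightarrow> real" where
  "Eloc m n p = (if multiplicity p (m*n) = 0 then 1 - real p/(real p^3-1)
     else if multiplicity p m = multiplicity p (m*n)
       then (1/real p^3)^multiplicity p (m*n) * ((real p^3+real p^2)/(real p^3-1))
     else (1/real p^3)^multiplicity p (m*n) * (-(real p^4)/(real p^3-1)))"

lemma row_shift:
  fixes f :: "nat \<Rightarrow> real"
  assumes "(f has_sum S) {k..}"
  shows "((\<lambda>a. if k \<le> a then f a else 0) has_sum S) UNIV"
proof -
  have "((\<lambda>a. if k \<le> a then f a else 0) has_sum S) {k..}"
    using assms by (rule has_sum_cong[THEN iffD1, rotated]) auto
  then show ?thesis by (rule has_sum_cong_neutral[THEN iffD1, rotated -1]) auto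
qed

lemma hh_local:
  assumes m: "m > 0" and n: "n > 0" and p: "prime p"
  shows "((\<lambda>(a,b). hh m n p a b) has_sum Eloc m n p) UNIV"
proof -
  define \<alpha> where "\<alpha> = multiplicity p m"
  define c where "c = multiplicity p (m*n)"
  have ac: "\<alpha> \<le> c" unfolding \<alpha>_def c_def using m n by (intro dvd_imp_multiplicity_le) auto
  have P: "real p > 1" using prime_gt_1_nat[OF p] by simp
  have z: "\<And>a b. b \<ge> 2 \<Longrightarrow> hh m n p a b = 0" by (simp add: hh_def tloc_def)
  have r0: "(\<lambda>a. hh m n p a 0) = (\<lambda>a. if c \<le> a then tloc (-1) p a 0 else 0)"
    using ac by (auto simp: hh_def \<alpha>_def[symmetric] c_def[symmetric])
  have r1: "(\<lambda>a. hh m n p a 1) = (\<lambda>a. if max \<alpha> (c - 1) \<le> a then tloc (-1) p a 1 else 0)"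
  proof (rule ext)
    fix a
    have "(\<alpha> \<le> a \<and> c \<le> a + 1) = (max \<alpha> (c - 1) \<le> a)" by arith
    then show "hh m n p a 1 = (if max \<alpha> (c - 1) \<le> a then tloc (-1) p a 1 else 0)"
      unfolding hh_def \<alpha>_def[symmetric] c_def[symmetric] by presburger
  qed
  show ?thesis
  proof (cases "c = 0")
    case True
    then have a0: "\<alpha> = 0" using ac by simp
    have s0: "((\<lambda>a. hh m n p a 0) has_sum (1 + real p / (real p - 1) * ((1 / real p ^ 3) / (1 - 1 / real p ^ 3)))) UNIV"
      unfolding r0 using True tloc0_all[OF p] by simp
    have s1: "((\<lambda>a. hh m n p a 1) has_sum ((-1) / (real p * (real p - 1)) * ((1 / real p ^ 3) ^ 0 / (1 - 1 / real p ^ 3)))) UNIV"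
      unfolding r1 using True a0 tloc1_from[OF p, of "-1" 0] by simp
    have "((\<lambda>(a,b). hh m n p a b) has_sum (1 - real p/(real p^3-1))) UNIV"
      using has_sum_two_rows[OF z s0 s1] unfolding algA0[OF P] .
    then show ?thesis using True by (simp add: Eloc_def c_def)
  next
    case False
    have s0: "((\<lambda>a. hh m n p a 0) has_sum (real p / (real p - 1) * ((1 / real p ^ 3) ^ c / (1 - 1 / real p ^ 3)))) UNIV"
      unfolding r0 using False by (intro row_shift tloc0_from p) auto
    show ?thesis
    proof (cases "\<alpha> = c")
      case True
      have s1: "((\<lambda>a. hh m n p a 1) has_sum ((-1) / (real p * (real p - 1)) * ((1 / real p ^ 3) ^ c / (1 - 1 / real p ^ 3)))) UNIV"
      proof -
        have mx: "max \<alpha> (c - 1) = c" using True by simp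
        show ?thesis unfolding r1 mx by (intro row_shift tloc1_from[OF p])
      qed
      have "((\<lambda>(a,b). hh m n p a b) has_sum ((1/real p^3)^c * ((real p^3+real p^2)/(real p^3-1)))) UNIV"
        using has_sum_two_rows[OF z s0 s1] unfolding algA1[OF P] .
      then show ?thesis using True False by (simp add: Eloc_def c_def \<alpha>_def)
    next
      case False2: False
      have mx: "max \<alpha> (c - 1) = c - 1" using ac False2 by simp
      have s1: "((\<lambda>a. hh m n p a 1) has_sum ((-1) / (real p * (real p - 1)) * ((1 / real p ^ 3) ^ (c - 1) / (1 - 1 / real p ^ 3)))) UNIV"
        unfolding r1 mx by (intro row_shift tloc1_from[OF p])
      have xc: "(1/real p^3)^c = (1/real p^3)^(c-1) * (1/real p^3)"
        using False by (metis Suc_diff_1 not_gr_zero power_Suc2)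
      have "((\<lambda>(a,b). hh m n p a b) has_sum ((1/real p^3)^(c-1) * (1/real p^3) * (-(real p^4)/(real p^3-1)))) UNIV"
        using has_sum_two_rows[OF z s0[unfolded xc] s1] unfolding algA2[OF P] .
      then have "((\<lambda>(a,b). hh m n p a b) has_sum ((1/real p^3)^c * (-(real p^4)/(real p^3-1)))) UNIV"
        unfolding xc .
      then show ?thesis using False False2 by (simp add: Eloc_def c_def \<alpha>_def)
    qed
  qed
qed

lemma tloc_abs: "prime p \<Longrightarrow> \<bar>tloc (-1) p a b\<bar> = tloc 1 p a b"
  by (simp add: tloc_def abs_divide abs_mult)

lemma tloc_nonneg: "tloc 1 p a b \<ge> 0"
  by (simp add: tloc_def)

lemma tloc1_total:
  assumes p: "prime p"
  shows "((\<lambda>(a,b). tloc 1 p a b) has_sum (1 + real p/(real p-1) * ((1/real p^3)/(1 - 1/real p^3)) + 1/(real p*(real p-1)) * ((1/real p^3)^0/(1 - 1/real p^3)))) UNIV"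
proof -
  have z: "\<And>a b. b \<ge> 2 \<Longrightarrow> tloc 1 p a b = 0" by (simp add: tloc_def)
  have s1: "((\<lambda>a. tloc 1 p a 1) has_sum (1 / (real p * (real p - 1)) * ((1 / real p ^ 3) ^ 0 / (1 - 1 / real p ^ 3)))) UNIV"
    using tloc1_from[OF p, of 1 0] by simp
  show ?thesis using has_sum_two_rows[OF z tloc0_all[OF p] s1] .
qed

lemma Eabs_le:
  assumes m: "m > 0" and n: "n > 0" and p: "prime p"
  shows "infsum (\<lambda>(a,b). \<bar>hh m n p a b\<bar>) UNIV \<le> 1 + 4 * inverse (real p ^ 2)"
proof -
  have "(\<lambda>(a,b). hh m n p a b) summable_on UNIV" using hh_local[OF m n p] summable_on_def by blast
  then have "(\<lambda>x. norm ((\<lambda>(a,b). hh m n p a b) x)) summable_on UNIV"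
    using summable_on_iff_abs_summable_on_real by blast
  then have s1: "(\<lambda>(a,b). \<bar>hh m n p a b\<bar>) summable_on UNIV"
    by (simp add: case_prod_beta')
  have s2: "(\<lambda>(a,b). tloc 1 p a b) summable_on UNIV" using tloc1_total[OF p] summable_on_def by blast
  have "infsum (\<lambda>(a,b). \<bar>hh m n p a b\<bar>) UNIV \<le> infsum (\<lambda>(a,b). tloc 1 p a b) UNIV"
    by (rule infsum_mono[OF s1 s2]) (auto simp: hh_def tloc_abs[OF p] tloc_nonneg)
  also have "\<dots> = 1 + real p/(real p-1) * ((1/real p^3)/(1 - 1/real p^3)) + 1/(real p*(real p-1)) * ((1/real p^3)^0/(1 - 1/real p^3))"
    using tloc1_total[OF p] by (rule infsumI)
  also have "\<dots> \<le> 1 + 4 * inverse (real p ^ 2)"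
    using prime_ge_2_nat[OF p] by (intro algAbs) simp
  finally show ?thesis .
qed

lemma prod_bound:
  assumes m: "m > 0" and n: "n > 0"
  shows "(\<Prod>p\<in>PB B. infsum (\<lambda>(a,b). \<bar>hh m n p a b\<bar>) UNIV) \<le> exp (4 * suminf (\<lambda>k. inverse (real k ^ 2)))"
proof -
  have summ: "summable (\<lambda>k. inverse (real k ^ 2))" using inverse_power_summable[of 2] by simp
  have "(\<Prod>p\<in>PB B. infsum (\<lambda>(a,b). \<bar>hh m n p a b\<bar>) UNIV) \<le> (\<Prod>p\<in>PB B. exp (4 * inverse (real p ^ 2)))"
  proof (rule prod_mono)
    fix p assume "p \<in> PB B"
    then have p: "prime p" by (simp add: PB_def)
    have "0 \<le> infsum (\<lambda>(a,b). \<bar>hh m n p a b\<bar>) UNIV" by (rule infsum_nonneg) auto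
    moreover have "infsum (\<lambda>(a,b). \<bar>hh m n p a b\<bar>) UNIV \<le> exp (4 * inverse (real p ^ 2))"
      using Eabs_le[OF m n p] exp_ge_add_one_self[of "4 * inverse (real p ^ 2)"] by linarith
    ultimately show "0 \<le> infsum (\<lambda>(a,b). \<bar>hh m n p a b\<bar>) UNIV \<and> infsum (\<lambda>(a,b). \<bar>hh m n p a b\<bar>) UNIV \<le> exp (4 * inverse (real p ^ 2))"
      by simp
  qed
  also have "\<dots> = exp (4 * (\<Sum>p\<in>PB B. inverse (real p ^ 2)))"
    by (simp add: exp_sum sum_distrib_left)
  also have "\<dots> \<le> exp (4 * suminf (\<lambda>k. inverse (real k ^ 2)))"
    using sum_le_suminf[OF summ, of "PB B"] by simp
  finally show ?thesis .
qed



lemma prod_Q_power: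
  fixes k :: nat
  assumes Q: "finite Q" "\<forall>p\<in>Q. prime p" and k: "k > 0" "prime_factors k \<subseteq> Q"
  shows "(\<Prod>p\<in>Q. real p ^ multiplicity p k) = real k"
proof -
  have "(\<Prod>p\<in>Q. p ^ multiplicity p k) = (\<Prod>p\<in>prime_factors k. p ^ multiplicity p k)"
  proof (rule prod.mono_neutral_right[OF Q(1) k(2)])
    show "\<forall>p\<in>Q - prime_factors k. p ^ multiplicity p k = 1"
      using Q k by (auto simp: not_dvd_imp_multiplicity_0 prime_factors_dvd)
  qed
  also have "\<dots> = k" using prime_factorization_nat[OF k(1)] by simp
  finally have "(\<Prod>p\<in>Q. p ^ multiplicity p k) = k" .
  then have "real (\<Prod>p\<in>Q. p ^ multiplicity p k) = real k" by simp
  then show ?thesis by simp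
qed

lemma prod_Q_totient:
  fixes k :: nat
  assumes Q: "finite Q" "\<forall>p\<in>Q. prime p" and k: "k > 0" "prime_factors k \<subseteq> Q"
  shows "(\<Prod>p\<in>Q. real (totient (p ^ multiplicity p k))) = real (totient k)"
proof -
  let ?f = "\<lambda>p. p ^ multiplicity p k"
  have pos: "multiplicity p k > 0" if "p \<in> prime_factors k" for p
    using that by (simp add: prime_factors_multiplicity)
  have inj: "inj_on ?f (prime_factors k)"
  proof (rule inj_onI)
    fix p q assume p: "p \<in> prime_factors k" and q: "q \<in> prime_factors k" and e: "?f p = ?f q"
    have "prime p" "prime q" using p q by auto
    then show "p = q" by (rule prime_power_eq_imp_eq[OF _ _ pos[OF p] e])
  qed
  have cop: "pairwise coprime (?f ` prime_factors k)"
  proof (rule pairwiseI)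
    fix x y assume x: "x \<in> ?f ` prime_factors k" and y: "y \<in> ?f ` prime_factors k" and xy: "x \<noteq> y"
    then obtain p q where p: "p \<in> prime_factors k" "x = ?f p" and q: "q \<in> prime_factors k" "y = ?f q" by auto
    then have "p \<noteq> q" using xy by auto
    then have "coprime p q" using p q by (intro primes_coprime) auto
    then show "coprime x y" using p q by simp
  qed
  have "totient k = totient (\<Prod>p\<in>prime_factors k. ?f p)"
    using prime_factorization_nat[OF k(1)] by simp
  also have "\<dots> = (\<Prod>p\<in>prime_factors k. totient (?f p))"
    by (rule totient_prod_coprime[OF cop inj])
  also have "\<dots> = (\<Prod>p\<in>Q. totient (?f p))"
  proof (rule prod.mono_neutral_left[OF Q(1) k(2)])
    show "\<forall>p\<in>Q - prime_factors k. totient (p ^ multiplicity p k) = 1"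
      using Q k by (auto simp: not_dvd_imp_multiplicity_0 prime_factors_dvd)
  qed
  finally have "real (totient k) = real (\<Prod>p\<in>Q. totient (?f p))" by simp
  then show ?thesis by simp
qed

definition mloc :: "nat \<Rightarrow> real" where
  "mloc b = (if b = 0 then 1 else if b = 1 then -1 else 0)"

lemma prod_Q_mu:
  fixes j :: nat
  assumes Q: "finite Q" "\<forall>p\<in>Q. prime p" and j: "j > 0" "prime_factors j \<subseteq> Q"
  shows "(\<Prod>p\<in>Q. mloc (multiplicity p j)) = moebius_mu j"
proof (cases "squarefree j")
  case True
  then have one: "\<forall>p\<in>prime_factors j. multiplicity p j = 1"
    using True squarefree_factorial_semiring'[of j] j by simp
  have "(\<Prod>p\<in>Q. mloc (multiplicity p j)) = (\<Prod>p\<in>prime_factors j. mloc (multiplicity p j))"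
  proof (rule prod.mono_neutral_right[OF Q(1) j(2)])
    show "\<forall>p\<in>Q - prime_factors j. mloc (multiplicity p j) = 1"
      using Q j by (auto simp: not_dvd_imp_multiplicity_0 prime_factors_dvd mloc_def)
  qed
  also have "\<dots> = (\<Prod>p\<in>prime_factors j. -1)"
    using one by (intro prod.cong) (auto simp: mloc_def)
  also have "\<dots> = moebius_mu j" using True j by (simp add: moebius_mu_def)
  finally show ?thesis .
next
  case False
  have "\<not> (\<forall>p. prime p \<longrightarrow> multiplicity p j \<le> 1)"
    using False squarefree_factorial_semiring''[of j] j by simp
  then obtain p where p: "prime p" "multiplicity p j > 1" by (auto simp: not_le)
  then have "p dvd j" by (rule_tac ccontr) (use not_dvd_imp_multiplicity_0[of p j] p(2) in simp)
  then have "p \<in> Q" using p j by (auto simp: prime_factors_dvd)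
  moreover have "mloc (multiplicity p j) = 0" using p by (simp add: mloc_def)
  ultimately have "(\<Prod>p\<in>Q. mloc (multiplicity p j)) = 0" using Q by (intro prod_zero) auto
  then show ?thesis using False by (simp add: moebius_mu_def)
qed

lemma tloc_mloc: "tloc (-1) p a b = mloc b / (real p ^ (2 * a) * real p ^ b * real (totient (p ^ (a + b))))"
  by (simp add: tloc_def mloc_def)



lemma GB_hh_eq:
  fixes m n i j B :: nat
  assumes m: "m > 0" and n: "n > 0" and i: "i > 0" and j: "j > 0"
    and B: "m * n \<le> B" "i \<le> B" "j \<le> B"
  shows "GB (hh m n) B (i,j) = (if m dvd i \<and> m * n dvd i * j
           then moebius_mu j / (real i ^ 2 * real j * real (totient (i * j))) else 0)"
proof -
  let ?Q = "PB B"
  have Qf: "finite ?Q" and Qp: "\<forall>p\<in>?Q. prime p" by (auto simp: PB_def)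
  have pfsub: "prime_factors k \<subseteq> ?Q" if "k > 0" "k \<le> B" for k
  proof
    fix p assume p: "p \<in> prime_factors k"
    then have "p \<le> k" using prime_factor_le that by blast
    then show "p \<in> PB B" using p that by (auto simp: PB_def)
  qed
  have ij: "i * j > 0" "i * j \<noteq> 0" using i j by auto
  have pfij: "prime_factors (i*j) \<subseteq> ?Q"
    using pfsub[OF i B(2)] pfsub[OF j B(3)] prime_factors_product[of i j] i j by auto
  have mult_ij: "multiplicity p (i*j) = multiplicity p i + multiplicity p j" if "prime p" for p
    using that i j by (intro prime_elem_multiplicity_mult_distrib) auto
  show ?thesis
  proof (cases "m dvd i \<and> m * n dvd i * j")
    case True
    have "GB (hh m n) B (i,j) = (\<Prod>p\<in>?Q. tloc (-1) p (multiplicity p i) (multiplicity p j))"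
      unfolding GB_def fst_conv snd_conv
    proof (rule prod.cong[OF refl])
      fix p assume p: "p \<in> ?Q"
      then have pp: "prime p" by (simp add: PB_def)
      have "multiplicity p m \<le> multiplicity p i" using True i by (intro dvd_imp_multiplicity_le) auto
      moreover have "multiplicity p (m*n) \<le> multiplicity p (i*j)" using True ij by (intro dvd_imp_multiplicity_le) auto
      ultimately show "hh m n p (multiplicity p i) (multiplicity p j) = tloc (-1) p (multiplicity p i) (multiplicity p j)"
        using mult_ij[OF pp] by (simp add: hh_def)
    qed
    also have "\<dots> = (\<Prod>p\<in>?Q. mloc (multiplicity p j)) /
        ((\<Prod>p\<in>?Q. real p ^ multiplicity p i) ^ 2 * (\<Prod>p\<in>?Q. real p ^ multiplicity p j) *
         (\<Prod>p\<in>?Q. real (totient (p ^ multiplicity p (i*j)))))"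
    proof -
      have "(\<Prod>p\<in>?Q. tloc (-1) p (multiplicity p i) (multiplicity p j)) =
            (\<Prod>p\<in>?Q. mloc (multiplicity p j) / ((real p ^ multiplicity p i) ^ 2 * real p ^ multiplicity p j *
               real (totient (p ^ multiplicity p (i*j)))))"
        using Qp by (intro prod.cong refl) (simp add: tloc_mloc pow2a mult_ij)
      also have "\<dots> = (\<Prod>p\<in>?Q. mloc (multiplicity p j)) /
        ((\<Prod>p\<in>?Q. real p ^ multiplicity p i) ^ 2 * (\<Prod>p\<in>?Q. real p ^ multiplicity p j) *
         (\<Prod>p\<in>?Q. real (totient (p ^ multiplicity p (i*j)))))"
        by (simp add: prod_dividef prod.distrib prod_power_distrib)
      finally show ?thesis .
    qed
    also have "\<dots> = moebius_mu j / (real i ^ 2 * real j * real (totient (i * j)))"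
      using prod_Q_mu[OF Qf Qp j pfsub[OF j B(3)]] prod_Q_power[OF Qf Qp i pfsub[OF i B(2)]]
        prod_Q_power[OF Qf Qp j pfsub[OF j B(3)]] prod_Q_totient[OF Qf Qp ij(1) pfij]
      by simp
    finally show ?thesis using True by simp
  next
    case False
    have mmn: "m \<le> m * n" using n by simp
    have "\<exists>p\<in>?Q. hh m n p (multiplicity p i) (multiplicity p j) = 0"
    proof (cases "m dvd i")
      case False
      have "\<not> (\<forall>p. prime p \<longrightarrow> multiplicity p m \<le> multiplicity p i)"
        using False multiplicity_le_imp_dvd[of m i] m by auto
      then obtain p where p: "prime p" "multiplicity p m > multiplicity p i" by (auto simp: not_le)
      then have "p dvd m" by (rule_tac ccontr) (use not_dvd_imp_multiplicity_0[of p m] p(2) in simp)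
      then have "p \<le> B" using m mmn B(1) dvd_imp_le[of p m] by linarith
      then show ?thesis using p by (intro bexI[of _ p]) (auto simp: hh_def PB_def)
    next
      case True
      then have nd: "\<not> m * n dvd i * j" using False by simp
      have "\<not> (\<forall>p. prime p \<longrightarrow> multiplicity p (m*n) \<le> multiplicity p (i*j))"
        using nd multiplicity_le_imp_dvd[of "m*n" "i*j"] m n by auto
      then obtain p where p: "prime p" "multiplicity p (m*n) > multiplicity p (i*j)" by (auto simp: not_le)
      then have "p dvd m * n" by (rule_tac ccontr) (use not_dvd_imp_multiplicity_0[of p "m*n"] p(2) in simp)
      then have "p \<le> B" using m n B(1) dvd_imp_le[of p "m*n"] by simp
      then show ?thesis using p mult_ij[OF p(1)] by (intro bexI[of _ p]) (auto simp: hh_def PB_def)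
    qed
    then have "GB (hh m n) B (i,j) = 0" unfolding GB_def using Qf by (intro prod_zero) auto
    then show ?thesis by (simp only: if_not_P[OF False])
  qed
qed



definition fS :: "nat \<Rightarrow> real" where
  "fS k = (if prime k then 1 - real k / (real k ^ 3 - 1) else 1)"

lemma cube_ge: "(P::real) \<ge> 2 \<Longrightarrow> P^3 \<ge> 4 * P"
proof -
  assume P: "P \<ge> 2"
  have "P * P \<ge> 2 * 2" using P by (intro mult_mono) auto
  then have "(P * P) * P \<ge> 4 * P" using P by (intro mult_right_mono) auto
  then show ?thesis by (simp add: power3_eq_cube)
qed

lemma fS_pos: "prime p \<Longrightarrow> fS p > 0"
proof -
  assume p: "prime p"
  have P: "real p \<ge> 2" using prime_ge_2_nat[OF p] by simp
  have "real p ^ 3 \<ge> 4 * real p" using cube_ge[OF P] .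
  then have "real p / (real p ^ 3 - 1) < 1" using P by (simp add: divide_simps)
  then show ?thesis using p by (simp add: fS_def)
qed

lemma fS_summable: "summable (\<lambda>k. norm (fS k - 1))"
proof (rule summable_comparison_test')
  show "summable (\<lambda>k. 2 * inverse (real k ^ 2))"
    using inverse_power_summable[of 2] by (intro summable_mult) simp
next
  fix k :: nat assume "k \<ge> 0"
  show "norm (norm (fS k - 1)) \<le> 2 * inverse (real k ^ 2)"
  proof (cases "prime k")
    case True
    have P: "real k \<ge> 2" using prime_ge_2_nat[OF True] by simp
    have c: "real k ^ 3 \<ge> 4 * real k" using cube_ge[OF P] .
    have d: "real k ^ 3 - 1 > 0" using c P by simp
    have e: "real k * real k ^ 2 = real k ^ 3" by (simp add: power2_eq_square power3_eq_cube)
    have key: "real k * real k ^ 2 \<le> 2 * (real k ^ 3 - 1)" unfolding e using c P by (smt (verit))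
    have "real k / (real k ^ 3 - 1) \<le> 2 / real k ^ 2"
      using d P key by (simp add: divide_simps)
    then show ?thesis using True d P by (simp add: fS_def divide_inverse abs_of_nonneg)
  qed (simp add: fS_def)
qed

lemma fS_lim: "(\<lambda>B. \<Prod>k\<le>B. fS k) \<longlonglongrightarrow> S_const"
proof -
  have "convergent_prod fS"
    by (intro abs_convergent_prod_imp_convergent_prod summable_imp_abs_convergent_prod fS_summable)
  then have "(\<lambda>B. \<Prod>k\<le>B. fS k) \<longlonglongrightarrow> prodinf fS" by (rule convergent_prod_LIMSEQ)
  moreover have "prodinf fS = S_const" unfolding S_const_def fS_def ..
  ultimately show ?thesis by simp
qed

lemma fS_PB: "(\<Prod>k\<le>B. fS k) = (\<Prod>p\<in>PB B. fS p)"
  by (rule prod.mono_neutral_right) (auto simp: PB_def fS_def)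



lemma Eloc_nondiv: "prime p \<Longrightarrow> multiplicity p (m*n) = 0 \<Longrightarrow> Eloc m n p = fS p"
  by (simp add: Eloc_def fS_def)

lemma pf_sub_PB:
  fixes k B :: nat
  assumes "k > 0" "k \<le> B"
  shows "prime_factors k \<subseteq> PB B"
proof
  fix p assume p: "p \<in> prime_factors k"
  then have "p \<le> k" using prime_factor_le assms by blast
  then show "p \<in> PB B" using p assms by (auto simp: PB_def)
qed

lemma prod_Eloc_split:
  assumes m: "m > 0" and n: "n > 0" and B: "m * n \<le> B"
  shows "(\<Prod>p\<in>PB B. Eloc m n p) = (\<Prod>p\<in>PB B. fS p) * (\<Prod>p\<in>prime_factors (m*n). Eloc m n p / fS p)"
proof -
  let ?A = "PB B" and ?S = "prime_factors (m*n)"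
  have SA: "?S \<subseteq> ?A" using m n B by (intro pf_sub_PB) auto
  have fA: "finite ?A" by simp
  have e1: "(\<Prod>p\<in>?A - ?S. Eloc m n p) = (\<Prod>p\<in>?A - ?S. fS p)"
  proof (rule prod.cong[OF refl])
    fix p assume p: "p \<in> ?A - ?S"
    then have pp: "prime p" by (simp add: PB_def)
    have "\<not> p dvd m * n" using p pp m n by (auto simp: prime_factors_dvd)
    then have "multiplicity p (m*n) = 0" by (rule not_dvd_imp_multiplicity_0)
    then show "Eloc m n p = fS p" using Eloc_nondiv[OF pp] by simp
  qed
  have e2: "(\<Prod>p\<in>?S. Eloc m n p) = (\<Prod>p\<in>?S. Eloc m n p / fS p) * (\<Prod>p\<in>?S. fS p)"
  proof -
    have "(\<Prod>p\<in>?S. Eloc m n p) = (\<Prod>p\<in>?S. Eloc m n p / fS p * fS p)"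
    proof (rule prod.cong[OF refl])
      fix p assume "p \<in> ?S"
      then have "fS p \<noteq> 0" using fS_pos by (metis in_prime_factors_imp_prime less_irrefl)
      then show "Eloc m n p = Eloc m n p / fS p * fS p" by simp
    qed
    then show ?thesis by (simp only: prod.distrib)
  qed
  have "(\<Prod>p\<in>?A. Eloc m n p) = (\<Prod>p\<in>?A - ?S. Eloc m n p) * (\<Prod>p\<in>?S. Eloc m n p)"
    by (rule prod.subset_diff[OF SA fA])
  also have "\<dots> = (\<Prod>p\<in>?A - ?S. fS p) * (\<Prod>p\<in>?S. fS p) * (\<Prod>p\<in>?S. Eloc m n p / fS p)"
    unfolding e1 e2 by (simp add: mult_ac)
  also have "(\<Prod>p\<in>?A - ?S. fS p) * (\<Prod>p\<in>?S. fS p) = (\<Prod>p\<in>?A. fS p)"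
    by (rule prod.subset_diff[OF SA fA, symmetric])
  finally show ?thesis .
qed

lemma algR:
  assumes P: "(P::real) \<ge> 2"
  shows "(w * (N/(P^3-1))) / (1 - P/(P^3-1)) = w * (N/(P^3-P-1))"
proof -
  have c: "P^3 \<ge> 4 * P" using cube_ge[OF P] .
  have d1: "P^3 - 1 > 0" using c P by simp
  have d2: "P^3 - P - 1 > 0" using c P by simp
  show ?thesis using d1 d2 by (simp add: divide_simps)
qed

lemma R_eq:
  assumes m: "m > 0" and n: "n > 0"
  shows "(\<Prod>p\<in>prime_factors (m*n). Eloc m n p / fS p) =
    1 / (real m ^ 3 * real n ^ 3)
    * (\<Prod>p\<in>prime_factors n. - (real p ^ 4) / (real p ^ 3 - real p - 1))
    * (\<Prod>p\<in>prime_factors m - prime_factors n. (real p ^ 3 + real p ^ 2) / (real p ^ 3 - real p - 1))"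
proof -
  let ?S = "prime_factors (m*n)"
  define g where "g p = (if p \<in> prime_factors n then - (real p ^ 4) / (real p ^ 3 - real p - 1)
      else (real p ^ 3 + real p ^ 2) / (real p ^ 3 - real p - 1))" for p
  have mn: "m * n > 0" using m n by simp
  have loc: "Eloc m n p / fS p = (1 / real p ^ 3) ^ multiplicity p (m*n) * g p" if p: "p \<in> ?S" for p
  proof -
    have pp: "prime p" using p by auto
    have P: "real p \<ge> 2" using prime_ge_2_nat[OF pp] by simp
    have cpos: "multiplicity p (m*n) > 0" using p by (simp add: prime_factors_multiplicity)
    have add: "multiplicity p (m*n) = multiplicity p m + multiplicity p n"
      using pp m n by (intro prime_elem_multiplicity_mult_distrib) auto
    have fs: "fS p = 1 - real p / (real p ^ 3 - 1)" using pp by (simp add: fS_def)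
    show ?thesis
    proof (cases "p \<in> prime_factors n")
      case True
      then have "multiplicity p n > 0" by (simp add: prime_factors_multiplicity)
      then have "multiplicity p m \<noteq> multiplicity p (m*n)" using add by simp
      then have E: "Eloc m n p = (1/real p^3)^multiplicity p (m*n) * (-(real p^4)/(real p^3-1))"
        using cpos by (simp add: Eloc_def)
      have "Eloc m n p / fS p = ((1/real p^3)^multiplicity p (m*n) * (-(real p^4)/(real p^3-1))) / (1 - real p / (real p ^ 3 - 1))"
        unfolding E fs ..
      also have "\<dots> = (1/real p^3)^multiplicity p (m*n) * (-(real p^4)/(real p^3-real p-1))"
        by (rule algR[OF P])
      finally show ?thesis using True by (simp add: g_def)
    next
      case False
      then have "multiplicity p n = 0" using pp n by (simp add: prime_factors_multiplicity)
      then have "multiplicity p m = multiplicity p (m*n)" using add by simp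
      then have E: "Eloc m n p = (1/real p^3)^multiplicity p (m*n) * ((real p^3+real p^2)/(real p^3-1))"
        using cpos by (simp add: Eloc_def)
      have "Eloc m n p / fS p = ((1/real p^3)^multiplicity p (m*n) * ((real p^3+real p^2)/(real p^3-1))) / (1 - real p / (real p ^ 3 - 1))"
        unfolding E fs ..
      also have "\<dots> = (1/real p^3)^multiplicity p (m*n) * ((real p^3+real p^2)/(real p^3-real p-1))"
        by (rule algR[OF P])
      finally show ?thesis using False by (simp add: g_def)
    qed
  qed
  have "(\<Prod>p\<in>?S. Eloc m n p / fS p) = (\<Prod>p\<in>?S. (1 / real p ^ 3) ^ multiplicity p (m*n)) * (\<Prod>p\<in>?S. g p)"
    using loc by (simp add: prod.distrib)
  also have "(\<Prod>p\<in>?S. (1 / real p ^ 3) ^ multiplicity p (m*n)) = 1 / (real m ^ 3 * real n ^ 3)"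
  proof -
    have "(\<Prod>p\<in>?S. (1 / real p ^ 3) ^ multiplicity p (m*n)) = 1 / (\<Prod>p\<in>?S. real p ^ multiplicity p (m*n)) ^ 3"
      by (simp add: pow3a prod_dividef prod_power_distrib)
    also have "(\<Prod>p\<in>?S. real p ^ multiplicity p (m*n)) = real (m * n)"
      by (rule prod_Q_power) (use mn in auto)
    finally show ?thesis by (simp add: power_mult_distrib)
  qed
  also have "(\<Prod>p\<in>?S. g p) = (\<Prod>p\<in>prime_factors n. - (real p ^ 4) / (real p ^ 3 - real p - 1))
    * (\<Prod>p\<in>prime_factors m - prime_factors n. (real p ^ 3 + real p ^ 2) / (real p ^ 3 - real p - 1))"
  proof -
    have eq: "?S = prime_factors n \<union> (prime_factors m - prime_factors n)"
      using prime_factors_product[of m n] m n by auto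
    have "(\<Prod>p\<in>?S. g p) = (\<Prod>p\<in>prime_factors n. g p) * (\<Prod>p\<in>prime_factors m - prime_factors n. g p)"
      unfolding eq by (rule prod.union_disjoint) auto
    also have "(\<Prod>p\<in>prime_factors n. g p) = (\<Prod>p\<in>prime_factors n. - (real p ^ 4) / (real p ^ 3 - real p - 1))"
      by (intro prod.cong refl) (simp add: g_def)
    also have "(\<Prod>p\<in>prime_factors m - prime_factors n. g p) = (\<Prod>p\<in>prime_factors m - prime_factors n. (real p ^ 3 + real p ^ 2) / (real p ^ 3 - real p - 1))"
      by (intro prod.cong refl) (simp add: g_def)
    finally show ?thesis .
  qed
  finally show ?thesis by (simp add: mult.assoc)
qed



theorem theorem4p2:
  fixes m n :: nat
  assumes "m > 0" and "n > 0"
  shows "((\<lambda>(i, j). moebius_mu j / (real i ^ 2 * real j * real (totient (i * j))))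
          has_sum
          (S_const / (real m ^ 3 * real n ^ 3)
            * (\<Prod>p\<in>prime_factors n. - (real p ^ 4) / (real p ^ 3 - real p - 1))
            * (\<Prod>p\<in>prime_factors m - prime_factors n.
                 (real p ^ 3 + real p ^ 2) / (real p ^ 3 - real p - 1))))
         {(i, j). i \<ge> 1 \<and> j \<ge> 1 \<and> m dvd i \<and> m * n dvd i * j}"
proof -
  note m = assms(1) and n = assms(2)
  define R where "R = (\<Prod>p\<in>prime_factors (m*n). Eloc m n p / fS p)"
  define F where "F = (\<lambda>(i,j). GB (hh m n) (m * n + i + j) (i,j))"
  define D where "D = {(i::nat,j::nat). i > 0 \<and> j > 0}"
  have hs: "\<And>p. prime p \<Longrightarrow> ((\<lambda>(a,b). hh m n p a b) has_sum Eloc m n p) UNIV"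
    using hh_local[OF m n] by blast
  have h1: "hh m n p 0 0 = 1" if p: "prime p" "p > m * n" for p
  proof -
    have "\<not> p dvd m * n" using p m n by (auto dest: dvd_imp_le)
    then have c0: "multiplicity p (m*n) = 0" by (rule not_dvd_imp_multiplicity_0)
    have "\<not> p dvd m" using \<open>\<not> p dvd m * n\<close> by auto
    then have a0: "multiplicity p m = 0" by (rule not_dvd_imp_multiplicity_0)
    show ?thesis using c0 a0 by (simp add: hh_def tloc_def)
  qed
  have bound: "\<And>B. (\<Prod>p\<in>PB B. infsum (\<lambda>(a,b). \<bar>hh m n p a b\<bar>) UNIV) \<le> exp (4 * suminf (\<lambda>k. inverse (real k ^ 2)))"
    using prod_bound[OF m n] by blast
  note EP = euler_product_pairs[of "hh m n" "Eloc m n" "m * n", OF hs h1 bound]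
  have Fsum: "F summable_on D" using EP(1) unfolding F_def D_def .
  have lim1: "(\<lambda>B. \<Prod>p\<in>PB B. Eloc m n p) \<longlonglongrightarrow> infsum F D" using EP(2) unfolding F_def D_def .
  have lim2: "(\<lambda>B. \<Prod>p\<in>PB B. Eloc m n p) \<longlonglongrightarrow> S_const * R"
  proof -
    have "(\<lambda>B. (\<Prod>k\<le>B. fS k) * R) \<longlonglongrightarrow> S_const * R"
      by (intro tendsto_mult_right fS_lim)
    moreover have "eventually (\<lambda>B. (\<Prod>k\<le>B. fS k) * R = (\<Prod>p\<in>PB B. Eloc m n p)) sequentially"
      using eventually_ge_at_top[of "m * n"]
    proof eventually_elim
      case (elim B)
      show ?case unfolding fS_PB R_def using prod_Eloc_split[OF m n elim] by simp
    qed
    ultimately show ?thesis by (rule Lim_transform_eventually)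
  qed
  have "infsum F D = S_const * R" using LIMSEQ_unique[OF lim1 lim2] .
  then have FH: "(F has_sum (S_const * R)) D" using Fsum has_sum_infsum by fastforce
  have target: "S_const * R = S_const / (real m ^ 3 * real n ^ 3)
            * (\<Prod>p\<in>prime_factors n. - (real p ^ 4) / (real p ^ 3 - real p - 1))
            * (\<Prod>p\<in>prime_factors m - prime_factors n.
                 (real p ^ 3 + real p ^ 2) / (real p ^ 3 - real p - 1))"
    unfolding R_def R_eq[OF m n] by simp
  have Feq: "F (i,j) = (if m dvd i \<and> m * n dvd i * j
           then moebius_mu j / (real i ^ 2 * real j * real (totient (i * j))) else 0)"
    if "(i,j) \<in> D" for i j
    unfolding F_def using that GB_hh_eq[OF m n, of i j "m * n + i + j"] by (simp add: D_def)
  have "(F has_sum (S_const * R)) D \<longleftrightarrow>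
      ((\<lambda>(i, j). moebius_mu j / (real i ^ 2 * real j * real (totient (i * j)))) has_sum (S_const * R))
         {(i, j). i \<ge> 1 \<and> j \<ge> 1 \<and> m dvd i \<and> m * n dvd i * j}"
  proof (rule has_sum_cong_neutral)
    fix x assume x: "x \<in> {(i, j). i \<ge> 1 \<and> j \<ge> 1 \<and> m dvd i \<and> m * n dvd i * j} - D"
    then show "(case x of (i, j) \<Rightarrow> moebius_mu j / (real i ^ 2 * real j * real (totient (i * j)))) = 0"
      by (auto simp: D_def)
  next
    fix x assume x: "x \<in> D - {(i, j). i \<ge> 1 \<and> j \<ge> 1 \<and> m dvd i \<and> m * n dvd i * j}"
    obtain i j where xe: "x = (i,j)" by (cases x)
    have ijD: "(i,j) \<in> D" using x xe by simp
    have nc: "\<not> (m dvd i \<and> m * n dvd i * j)" using x xe by (auto simp: D_def)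
    have "F (i,j) = 0" using Feq[OF ijD] by (simp only: if_not_P[OF nc])
    then show "F x = 0" using xe by simp
  next
    fix x assume x: "x \<in> D \<inter> {(i, j). i \<ge> 1 \<and> j \<ge> 1 \<and> m dvd i \<and> m * n dvd i * j}"
    obtain i j where xe: "x = (i,j)" by (cases x)
    have "(i,j) \<in> D" using x xe by simp
    moreover have "m dvd i \<and> m * n dvd i * j" using x xe by auto
    ultimately show "F x = (case x of (i, j) \<Rightarrow> moebius_mu j / (real i ^ 2 * real j * real (totient (i * j))))"
      using Feq[of i j] xe by simp
  qed
  with FH target show ?thesis by simp
qed


end
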